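(* Let $\mathbb{L}$ be a $\sigma$-complete orthomodular lattice and let $\mathcal{S}_b(\mathbb{L})$ be the set of bounded spectral families in $\mathbb{L}$. Then the map $E\mapsto f_E$ from $\mathcal{S}_b(\mathbb{L})$ to the set of functions $\mathcal{Q}(\mathbb{L})\to\mathbb{R}$, where $f_E(\mathfrak{B}):=\inf\{\lambda\in\mathbb{R}\mid E_\lambda\in\mathfrak{B}\}$, is injective.
   Context: A spectral family in a $\sigma$-complete lattice $\mathbb{L}$ (with $0$ and $1$) is a map $E:\mathbb{R}\to\mathbb{L}$, $\lambda\mapsto E_\lambda$, with (1) $E_\lambda\le E_\mu$ for $\lambda\le\mu$; (2) $E_\lambda=\bigwedge_{\mu>\lambda}E_\mu$; (3) $\bigwedge_\lambda E_\lambda=0$, $\bigvee_\lambda E_\lambda=1$ (infima/suprema over real index sets may be computed along the rationals). $E$ is bounded if there are $a\le b$ with $E_\lambda=0$ for $\lambda<a$ and $E_\lambda=1$ for $\lambda\ge b$. A dual ideal of $\mathbb{L}$ is a nonempty subset $\mathcal{J}$ with $0\notin\mathcal{J}$, upward closed, and closed under finite meets; a quasipoint is a maximal dual ideal. The Stone spectrum $\mathcal{Q}(\mathbb{L})$ is the set of quasipoints with the topology having as base the sets $\mathcal{Q}_a(\mathbb{L})=\{\mathfrak{B}\in\mathcal{Q}(\mathbb{L})\mid a\in\mathfrak{B}\}$, $a\in\mathbb{L}$. *)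

theory Defs
  imports "HOL-Analysis.Analysis" "HOL-Library.Complemented_Lattices"
begin

definition is_inf :: "'a::order \<Rightarrow> 'a set \<Rightarrow> bool" where
  "is_inf x A \<longleftrightarrow> (\<forall>a\<in>A. x \<le> a) \<and> (\<forall>y. (\<forall>a\<in>A. y \<le> a) \<longrightarrow> y \<le> x)"

definition is_sup :: "'a::order \<Rightarrow> 'a set \<Rightarrow> bool" where
  "is_sup x A \<longleftrightarrow> (\<forall>a\<in>A. a \<le> x) \<and> (\<forall>y. (\<forall>a\<in>A. a \<le> y) \<longrightarrow> x \<le> y)"

definition sigma_complete :: "'a::order itself \<Rightarrow> bool" where
  "sigma_complete _ \<longleftrightarrow>
     (\<forall>A :: 'a set. countable A \<longrightarrow> (\<exists>x. is_inf x A) \<and> (\<exists>x. is_sup x A))"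

definition spectral_family :: "(real \<Rightarrow> 'a::bounded_lattice) \<Rightarrow> bool" where
  "spectral_family E \<longleftrightarrow>
     (\<forall>l m. l \<le> m \<longrightarrow> E l \<le> E m) \<and>
     (\<forall>l. is_inf (E l) (E ` {l<..})) \<and>
     is_inf bot (range E) \<and> is_sup top (range E)"

definition bounded_spectral_family :: "(real \<Rightarrow> 'a::bounded_lattice) \<Rightarrow> bool" where
  "bounded_spectral_family E \<longleftrightarrow> spectral_family E \<and>
     (\<exists>a b. a \<le> b \<and> (\<forall>l. l < a \<longrightarrow> E l = bot) \<and> (\<forall>l. b \<le> l \<longrightarrow> E l = top))"

definition dual_ideal :: "'a::bounded_lattice set \<Rightarrow> bool" where
  "dual_ideal J \<longleftrightarrow> J \<noteq> {} \<and> bot \<notin> J \<and>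
     (\<forall>a b. a \<in> J \<and> a \<le> b \<longrightarrow> b \<in> J) \<and>
     (\<forall>a\<in>J. \<forall>b\<in>J. inf a b \<in> J)"

definition quasipoint :: "'a::bounded_lattice set \<Rightarrow> bool" where
  "quasipoint B \<longleftrightarrow> dual_ideal B \<and> (\<forall>J. dual_ideal J \<and> B \<subseteq> J \<longrightarrow> J = B)"

definition stone_spectrum :: "'a::bounded_lattice set set" where
  "stone_spectrum = {B. quasipoint B}"

definition observable_fun :: "(real \<Rightarrow> 'a::bounded_lattice) \<Rightarrow> 'a set \<Rightarrow> real" where
  "observable_fun E B = Inf {l. E l \<in> B}"

end

theory Submission
  imports Defs
begin

lemma om_witness:
  fixes a b :: "'a::orthomodular_lattice"
  assumes "\<not> a \<le> b"
  shows "inf (-(inf a b)) a \<noteq> bot \<and> inf (inf (-(inf a b)) a) b = bot"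
proof
  have "sup (inf a b) (inf (-(inf a b)) a) = a" by (rule orthomodular) simp
  then show "inf (-(inf a b)) a \<noteq> bot"
  proof (intro notI)
    assume h: "sup (inf a b) (inf (-(inf a b)) a) = a" and z: "inf (-(inf a b)) a = bot"
    from h z have "inf a b = a" by simp
    then have "a \<le> b" by (simp only: inf.absorb_iff1)
    then show False using assms by simp
  qed
  have "inf (inf (-(inf a b)) a) b = inf (-(inf a b)) (inf a b)" by (simp add: inf_assoc)
  then show "inf (inf (-(inf a b)) a) b = bot" by (simp only: compl_inf_bot)
qed

lemma exists_quasipoint:
  fixes c :: "'a::bounded_lattice"
  assumes "c \<noteq> bot"
  shows "\<exists>B. quasipoint B \<and> c \<in> B"
proof -
  let ?A = "{J. dual_ideal J \<and> c \<in> J}"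
  have "\<forall>C\<in>chains ?A. \<exists>U\<in>?A. \<forall>X\<in>C. X \<subseteq> U"
  proof
    fix C assume C: "C \<in> chains ?A"
    show "\<exists>U\<in>?A. \<forall>X\<in>C. X \<subseteq> U"
    proof (cases "C = {}")
      case True
      have "dual_ideal {x. c \<le> x}" using assms unfolding dual_ideal_def
        by (auto intro: order_trans dest: le_bot)
      then show ?thesis using True by auto
    next
      case False
      have sub: "C \<subseteq> ?A" and ch: "\<forall>X\<in>C. \<forall>Y\<in>C. X \<subseteq> Y \<or> Y \<subseteq> X"
        using C unfolding chains_def chain_subset_def by auto
      have "dual_ideal (\<Union>C)" unfolding dual_ideal_def
      proof (intro conjI allI ballI impI)
        show "\<Union>C \<noteq> {}" using False sub by auto
        show "bot \<notin> \<Union>C" using sub unfolding dual_ideal_def by auto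
        fix a b assume "a \<in> \<Union>C \<and> a \<le> b" then show "b \<in> \<Union>C"
          using sub unfolding dual_ideal_def by blast
      next
        fix a b assume a: "a \<in> \<Union>C" and b: "b \<in> \<Union>C"
        then obtain X Y where X: "X \<in> C" "a \<in> X" and Y: "Y \<in> C" "b \<in> Y" by auto
        from ch X Y have "X \<subseteq> Y \<or> Y \<subseteq> X" by auto
        then show "inf a b \<in> \<Union>C"
        proof
          assume "X \<subseteq> Y" then show ?thesis using X Y sub unfolding dual_ideal_def by blast
        next
          assume "Y \<subseteq> X" then show ?thesis using X Y sub unfolding dual_ideal_def by blast
        qed
      qed
      moreover have "c \<in> \<Union>C" using False sub by auto
      ultimately show ?thesis by auto
    qed
  qed
  then obtain M where M: "M \<in> ?A" "\<forall>X\<in>?A. M \<subseteq> X \<longrightarrow> X = M"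
    using Zorn_Lemma2[of ?A] by blast
  then have "quasipoint M" unfolding quasipoint_def by auto
  with M show ?thesis by auto
qed

lemma main_dir:
  fixes E F :: "real \<Rightarrow> 'a::orthomodular_lattice"
  assumes E: "bounded_spectral_family E" and F: "bounded_spectral_family F"
    and eq: "\<forall>B. quasipoint B \<longrightarrow> observable_fun E B = observable_fun F B"
  shows "E l \<le> F l"
proof (rule ccontr)
  assume nle: "\<not> E l \<le> F l"
  have "\<exists>m>l. \<not> E l \<le> F m"
  proof (rule ccontr)
    assume "\<not> ?thesis"
    then have "\<forall>x\<in>F ` {l<..}. E l \<le> x" by auto
    moreover have "is_inf (F l) (F ` {l<..})" using F
      unfolding bounded_spectral_family_def spectral_family_def by auto
    ultimately show False using nle unfolding is_inf_def by auto
  qed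
  then obtain m where m: "m > l" "\<not> E l \<le> F m" by auto
  define c where "c = inf (-(inf (E l) (F m))) (E l)"
  have c: "c \<noteq> bot" "inf c (F m) = bot" using om_witness[OF m(2)] unfolding c_def by auto
  obtain B where B: "quasipoint B" "c \<in> B" using exists_quasipoint[OF c(1)] by auto
  have dB: "dual_ideal B" using B unfolding quasipoint_def by auto
  have up: "\<And>x y. x \<in> B \<Longrightarrow> x \<le> y \<Longrightarrow> y \<in> B" using dB unfolding dual_ideal_def by blast
  have nb: "bot \<notin> B" using dB unfolding dual_ideal_def by blast
  have topB: "top \<in> B" using B(2) up by auto
  have ElB: "E l \<in> B" using up[OF B(2)] unfolding c_def by simp
  obtain a where a: "\<forall>x. x < a \<longrightarrow> E x = bot" using E unfolding bounded_spectral_family_def by auto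
  have bddE: "bdd_below {x. E x \<in> B}"
  proof (rule bdd_belowI[of _ a])
    fix x assume "x \<in> {x. E x \<in> B}"
    then have "E x \<in> B" by simp
    then show "a \<le> x" using a nb by (cases "x < a") auto
  qed
  have fE: "observable_fun E B \<le> l" unfolding observable_fun_def
    using bddE ElB by (intro cInf_lower) auto
  obtain b where b: "\<forall>x. b \<le> x \<longrightarrow> F x = top" using F unfolding bounded_spectral_family_def by auto
  have Fmono: "\<And>x y. x \<le> y \<Longrightarrow> F x \<le> F y" using F
    unfolding bounded_spectral_family_def spectral_family_def by auto
  have notF: "F x \<notin> B" if "x \<le> m" for x
  proof
    assume "F x \<in> B"
    then have "F m \<in> B" using up Fmono[OF that] by blast
    then have "inf c (F m) \<in> B" using dB B(2) unfolding dual_ideal_def by blast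
    then show False using c nb by simp
  qed
  have "F b \<in> B" using b topB by simp
  then have ne: "{x. F x \<in> B} \<noteq> {}" by auto
  have allm: "\<forall>x\<in>{x. F x \<in> B}. m \<le> x" 
  proof
    fix x assume "x \<in> {x. F x \<in> B}"
    then have "F x \<in> B" by simp
    then show "m \<le> x" using notF by (cases "x \<le> m") auto
  qed
  have fF: "m \<le> observable_fun F B" unfolding observable_fun_def
    using ne allm by (intro cInf_greatest) auto
  have "observable_fun E B = observable_fun F B" using eq B(1) by blast
  then show False using fE fF m(1) by linarith
qed

theorem proposition2p7:
  assumes "sigma_complete TYPE('a::orthomodular_lattice)"
  shows "inj_on (\<lambda>E. restrict (observable_fun E) (stone_spectrum :: 'a set set))
                {E :: real \<Rightarrow> 'a. bounded_spectral_family E}"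
proof (rule inj_onI)
  fix E F :: "real \<Rightarrow> 'a"
  assume E: "E \<in> {E. bounded_spectral_family E}" and F: "F \<in> {E. bounded_spectral_family E}"
    and r: "restrict (observable_fun E) stone_spectrum = restrict (observable_fun F) stone_spectrum"
  have eq: "\<forall>B. quasipoint B \<longrightarrow> observable_fun E B = observable_fun F B"
  proof (intro allI impI)
    fix B :: "'a set" assume "quasipoint B"
    then have "B \<in> stone_spectrum" unfolding stone_spectrum_def by auto
    then show "observable_fun E B = observable_fun F B" using fun_cong[OF r, of B] by simp
  qed
  have eq': "\<forall>B. quasipoint B \<longrightarrow> observable_fun F B = observable_fun E B" using eq by auto
  show "E = F"
  proof
    fix l
    have 1: "E l \<le> F l" using main_dir[of E F l] E F eq by simp
    have 2: "F l \<le> E l" using main_dir[of F E l] E F eq' by simp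
    show "E l = F l" using 1 2 by (rule order.antisym)
  qed
qed

end
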